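(* Consider a market with $n$ goods, supplies $w_i>0$ and demands $x_i:(0,\infty)^n\to(0,\infty)$ satisfying: (fixed spending) $\sum_ip_ix_i(p)=M$ for all $p$ (constant $M>0$); (WGS) for $j\ne i$, $x_j(p)$ is non-decreasing in $p_i$; (elasticity $E$) each $x_i$ is differentiable in $p_i$ and $\frac{x_i(p)}{p_i}\le-\frac{\partial x_i}{\partial p_i}(p)\le E\frac{x_i(p)}{p_i}$ for all $p$, where $E\ge1$. Let $0<\lambda\le\frac12$ with $\lambda(2E-1)\le\frac12$. Given $p$, define the simultaneous update $p'$ by $p_i'=p_i\big(1+\lambda\min\{1,\frac{x_i(p)-w_i}{w_i}\}\big)$ for all $i$, and let $\phi(q)=\sum_iq_i|x_i(q)-w_i|$. Then \[ \phi(p)-\phi(p')\ \ge\ \sum_i\lambda\, p_i|x_i(p)-w_i|\min\Big\{1,\frac{w_i}{|x_i(p)-w_i|}\Big\} \] (terms with $x_i(p)=w_i$ being $0$). In particular, if $x_i(p)\le d\,w_i$ for all $i$ with $d\ge 2$, then $\phi(p')\le\big(1-\frac{\lambda}{d-1}\big)\phi(p)$. *)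

theory Defs
  imports Complex_Main
begin

definition pos_prices :: "('n \<Rightarrow> real) \<Rightarrow> bool" where
  "pos_prices p \<longleftrightarrow> (\<forall>i. p i > 0)"

definition phi :: "('n::finite \<Rightarrow> ('n \<Rightarrow> real) \<Rightarrow> real) \<Rightarrow> ('n \<Rightarrow> real) \<Rightarrow> ('n \<Rightarrow> real) \<Rightarrow> real" where
  "phi x w q = (\<Sum>i\<in>UNIV. q i * \<bar>x i q - w i\<bar>)"

definition update :: "real \<Rightarrow> ('n \<Rightarrow> ('n \<Rightarrow> real) \<Rightarrow> real) \<Rightarrow> ('n \<Rightarrow> real) \<Rightarrow> ('n \<Rightarrow> real) \<Rightarrow> ('n \<Rightarrow> real)" where
  "update lam x w p = (\<lambda>i. p i * (1 + lam * min 1 ((x i p - w i) / w i)))"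

end

theory Submission
  imports Defs
begin

lemma own_mono:
  fixes f :: "real \<Rightarrow> real" and E a b :: real
  assumes d: "\<And>t. t > 0 \<Longrightarrow> \<exists>D. (f has_real_derivative D) (at t) \<and> - D \<le> E * (f t / t)"
    and ab: "0 < a" "a \<le> b"
  shows "f a * a powr E \<le> f b * b powr E"
proof (rule DERIV_nonneg_imp_nondecreasing[OF ab(2)])
  fix t assume t: "a \<le> t" "t \<le> b"
  then have tp: "t > 0" using ab by simp
  obtain D where D: "(f has_real_derivative D) (at t)" "- D \<le> E * (f t / t)" using d[OF tp] by blast
  have "((\<lambda>t. f t * t powr E) has_real_derivative D * t powr E + f t * (E * t powr (E - 1))) (at t)"
    using D(1) tp by (auto intro!: derivative_eq_intros)
  moreover have "D * t powr E + f t * (E * t powr (E - 1)) = t powr E * (D + E * (f t / t))"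
    using tp by (simp add: powr_diff field_simps)
  moreover have "t powr E * (D + E * (f t / t)) \<ge> 0" using D(2) by simp
  ultimately show "\<exists>y. ((\<lambda>t. f t * t powr E) has_real_derivative y) (at t) \<and> 0 \<le> y" by metis
qed

lemma num1:
  fixes u lam E :: real
  assumes "0 \<le> u" "u \<le> 1" "0 \<le> lam" "lam * E \<le> 1/2" "E \<ge> 1"
  shows "(1 + lam * u) powr E \<le> 1 + u"
proof -
  have pos: "1 + lam * u > 0" using assms by (simp add: add_pos_nonneg)
  have "(1 + lam * u) powr E = exp (E * ln (1 + lam * u))" using pos by (simp add: powr_def)
  also have "\<dots> \<le> exp (E * (lam * u))"
    using ln_add_one_self_le_self[of "lam*u"] assms by (intro exp_mono mult_left_mono) auto
  also have "\<dots> \<le> exp (u / 2)"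
  proof -
    have "E * (lam * u) = (lam * E) * u" by simp
    also have "\<dots> \<le> (1/2) * u" using assms by (intro mult_right_mono) auto
    finally show ?thesis by simp
  qed
  also have "\<dots> \<le> 1 / (1 - u / 2)"
  proof -
    have "1 + (- (u/2)) \<le> exp (- (u/2))" by (rule exp_ge_add_one_self)
    hence "(1 - u/2) * exp (u/2) \<le> exp (-(u/2)) * exp (u/2)" by (intro mult_right_mono) auto
    hence "(1 - u/2) * exp (u/2) \<le> 1" by (simp add: exp_add[symmetric])
    thus ?thesis using assms by (simp add: field_simps)
  qed
  also have "\<dots> \<le> 1 + u"
  proof -
    have uu: "u * u \<le> u" using assms mult_left_le[of u u] by simp
    have "1 \<le> (1 + u) * (1 - u/2)" using uu by (simp add: algebra_simps)
    thus ?thesis using assms by (simp add: field_simps)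
  qed
  finally show ?thesis .
qed

lemma num2:
  fixes v lam E :: real
  assumes "0 < v" "v < 1" "0 \<le> lam" "lam \<le> 1/2" "lam * E \<le> 1/2" "E \<ge> 1"
  shows "1 - v \<le> (1 - lam * v) powr E"
proof -
  define y where "y = lam * v"
  have y0: "0 \<le> y" using assms unfolding y_def by simp
  have "lam * v \<le> lam * 1" using assms by (intro mult_left_mono) auto
  hence y1: "y \<le> 1/2" using assms unfolding y_def by simp
  have pos: "1 - y > 0" using y1 by simp
  have "ln (1 + y / (1 - y)) \<le> y / (1 - y)" using y0 pos by (intro ln_add_one_self_le_self) simp
  moreover have "1 + y / (1 - y) = 1 / (1 - y)" using pos by (simp add: field_simps)
  ultimately have "- ln (1 - y) \<le> y / (1 - y)" using pos by (simp add: ln_div)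
  hence "E * (- ln (1 - y)) \<le> E * (y / (1 - y))" using assms by (intro mult_left_mono) auto
  hence L: "E * ln (1 - y) \<ge> - (E * (y / (1 - y)))" by simp
  have "E * (y / (1 - y)) \<le> v"
  proof -
    have "E * lam \<le> 1 - y" using assms y1 by (simp add: mult.commute)
    hence "E * lam * v \<le> (1 - y) * v" using assms by (intro mult_right_mono) auto
    thus ?thesis using pos unfolding y_def by (simp add: field_simps)
  qed
  hence "1 - v \<le> 1 + E * ln (1 - y)" using L by linarith
  also have "\<dots> \<le> exp (E * ln (1 - y))" by (rule exp_ge_add_one_self)
  also have "\<dots> = (1 - y) powr E" using pos by (simp add: powr_def)
  finally show ?thesis unfolding y_def .
qed

lemma wgs_multi_aux:
  fixes x :: "'n::finite \<Rightarrow> ('n \<Rightarrow> real) \<Rightarrow> real"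
  assumes WGS: "\<forall>q i j s t. pos_prices q \<and> j \<noteq> i \<and> 0 < s \<and> s \<le> t
                 \<longrightarrow> x j (q(i := s)) \<le> x j (q(i := t))"
    and fin: "finite S"
  shows "\<forall>q q'. pos_prices q \<and> (\<forall>k. q k \<le> q' k) \<and> (\<forall>k. k \<notin> S \<longrightarrow> q k = q' k) \<and> i \<notin> S
           \<longrightarrow> x i q \<le> x i q'"
  using fin
proof (induction S rule: finite_induct)
  case empty
  then show ?case by (auto intro: order_eq_refl arg_cong[where f="x i"])
next
  case (insert k S)
  show ?case
  proof (intro allI impI)
    fix q q' :: "'n \<Rightarrow> real"
    assume h: "pos_prices q \<and> (\<forall>k. q k \<le> q' k) \<and> (\<forall>ka. ka \<notin> insert k S \<longrightarrow> q ka = q' ka) \<and> i \<notin> insert k S"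
    define q'' where "q'' = q'(k := q k)"
    have pq: "\<forall>j. q j > 0" using h by (simp add: pos_prices_def)
    have p'': "pos_prices q''" unfolding pos_prices_def q''_def
      using h pq by (auto intro: order_less_le_trans)
    have "x i q \<le> x i q''"
      using insert.IH h unfolding q''_def by auto
    moreover have "x i (q''(k := q k)) \<le> x i (q''(k := q' k))"
      using WGS p'' h pq by auto
    moreover have "q''(k := q k) = q''" "q''(k := q' k) = q'" unfolding q''_def by auto
    ultimately show "x i q \<le> x i q'" by simp
  qed
qed

lemma wgs_multi:
  fixes x :: "'n::finite \<Rightarrow> ('n \<Rightarrow> real) \<Rightarrow> real"
  assumes WGS: "\<forall>q i j s t. pos_prices q \<and> j \<noteq> i \<and> 0 < s \<and> s \<le> t
                 \<longrightarrow> x j (q(i := s)) \<le> x j (q(i := t))"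
    and "pos_prices q" "\<forall>k. q k \<le> q' k" "q i = q' i"
  shows "x i q \<le> x i q'"
  using wgs_multi_aux[OF WGS, of "UNIV - {i}" i] assms by auto

theorem mainTheorem7:
  fixes x :: "'n::finite \<Rightarrow> ('n \<Rightarrow> real) \<Rightarrow> real"
    and w p :: "'n \<Rightarrow> real"
    and M E lam :: real
  assumes w_pos: "\<forall>i. w i > 0"
    and x_pos: "\<forall>q. pos_prices q \<longrightarrow> (\<forall>i. x i q > 0)"
    and M_pos: "M > 0"
    and spending: "\<forall>q. pos_prices q \<longrightarrow> (\<Sum>i\<in>UNIV. q i * x i q) = M"
    and WGS: "\<forall>q i j s t. pos_prices q \<and> j \<noteq> i \<and> 0 < s \<and> s \<le> t
                 \<longrightarrow> x j (q(i := s)) \<le> x j (q(i := t))"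
    and elasticity: "\<forall>q i. pos_prices q \<longrightarrow> (\<exists>D.
                 ((\<lambda>t. x i (q(i := t))) has_real_derivative D) (at (q i))
                 \<and> x i q / q i \<le> - D \<and> - D \<le> E * (x i q / q i))"
    and E_ge: "E \<ge> 1"
    and lam_pos: "0 < lam" and lam_le: "lam \<le> 1/2"
    and lam_E: "lam * (2 * E - 1) \<le> 1/2"
    and p_pos: "pos_prices p"
  shows "phi x w p - phi x w (update lam x w p)
           \<ge> (\<Sum>i\<in>UNIV. lam * p i * \<bar>x i p - w i\<bar> * min 1 (w i / \<bar>x i p - w i\<bar>))
         \<and> (\<forall>d::real. d \<ge> 2 \<and> (\<forall>i. x i p \<le> d * w i)
              \<longrightarrow> phi x w (update lam x w p) \<le> (1 - lam / (d - 1)) * phi x w p)"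
proof -
  define p' where "p' = update lam x w p"
  define m where "m = (\<lambda>i. min 1 ((x i p - w i) / w i))"
  have p'_eq: "\<And>i. p' i = p i * (1 + lam * m i)" unfolding p'_def m_def update_def by simp
  have pp: "\<And>i. p i > 0" using p_pos by (simp add: pos_prices_def)
  have xp: "\<And>i. x i p > 0" using x_pos p_pos by auto
  have wp: "\<And>i. w i > 0" using w_pos by auto
  have lamE: "lam * E \<le> 1/2" using lam_E lam_le by (simp add: algebra_simps)
  have m_gt: "m i > -1" for i
  proof -
    have "(x i p - w i) / w i = x i p / w i - 1" using wp[of i] by (simp add: field_simps)
    moreover have "x i p / w i > 0" using xp[of i] wp[of i] by simp
    ultimately show ?thesis unfolding m_def by simp
  qed
  have m_le: "m i \<le> 1" for i unfolding m_def by simp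
  have fac_pos: "1 + lam * m i > 0" for i
  proof -
    have "lam * (-1) \<le> lam * m i" using m_gt[of i] lam_pos by (intro mult_left_mono) auto
    thus ?thesis using lam_le by simp
  qed
  have p'p: "p' i > 0" for i using p'_eq pp fac_pos by simp
  define r where "r = (\<lambda>i. if x i p < w i then p' i else p i)"
  have rp: "r i > 0" for i using p'p pp unfolding r_def by simp
  have posp': "pos_prices p'" and posr: "pos_prices r" using p'p rp by (auto simp: pos_prices_def)
  have m_B: "\<not> x i p < w i \<Longrightarrow> 0 \<le> m i" for i using wp[of i] unfolding m_def by simp
  have m_A: "x i p < w i \<Longrightarrow> m i = (x i p - w i) / w i" for i
  proof -
    assume "x i p < w i"
    hence "(x i p - w i) / w i < 0" using wp[of i] by (simp add: divide_neg_pos)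
    thus ?thesis unfolding m_def by simp
  qed
  have m_A': "x i p < w i \<Longrightarrow> m i < 0" for i using m_A wp[of i] by (simp add: divide_neg_pos)
  have B_ge: "\<not> x i p < w i \<Longrightarrow> p i \<le> p' i" for i
    using p'_eq[of i] pp[of i] m_B[of i] lam_pos by simp
  have A_le: "x i p < w i \<Longrightarrow> p' i \<le> p i" for i
  proof -
    assume h: "x i p < w i"
    have "lam * m i \<le> 0" using m_A'[OF h] lam_pos by (simp add: mult_pos_neg less_imp_le)
    thus ?thesis using p'_eq[of i] pp[of i] by (simp add: mult_left_le)
  qed
  have r_le_p': "\<forall>k. r k \<le> p' k" using B_ge unfolding r_def by auto
  have r_le_p: "\<forall>k. r k \<le> p k" using A_le unfolding r_def by auto
  have own: "\<And>q i a b. pos_prices q \<Longrightarrow> 0 < a \<Longrightarrow> a \<le> b \<Longrightarrow>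
      x i (q(i := a)) * a powr E \<le> x i (q(i := b)) * b powr E"
  proof -
    fix q :: "'n \<Rightarrow> real" and i :: 'n and a b :: real
    assume q: "pos_prices q" and ab: "0 < a" "a \<le> b"
    show "x i (q(i := a)) * a powr E \<le> x i (q(i := b)) * b powr E"
    proof (rule own_mono[where f = "\<lambda>t. x i (q(i := t))", OF _ ab])
      fix t :: real assume t: "t > 0"
      have "pos_prices (q(i := t))" using q t by (auto simp: pos_prices_def)
      then obtain D where D: "((\<lambda>s. x i ((q(i := t))(i := s))) has_real_derivative D) (at ((q(i := t)) i))"
          "- D \<le> E * (x i (q(i := t)) / (q(i := t)) i)"
        using elasticity by blast
      show "\<exists>D. ((\<lambda>t. x i (q(i := t))) has_real_derivative D) (at t) \<and> - D \<le> E * (x i (q(i := t)) / t)"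
        using D by auto
    qed
  qed
  define a where "a = (\<lambda>i. p' i * w i)"
  define s where "s = (\<lambda>i. p i * x i p)"
  define s' where "s' = (\<lambda>i. p' i * x i p')"
  define sr where "sr = (\<lambda>i. r i * x i r)"
  have F1: "sr i \<le> a i" if A: "x i p < w i" for i
  proof -
    define \<rho> where "\<rho> = 1 + lam * m i"
    define v where "v = (w i - x i p) / w i"
    have \<rho>v: "\<rho> = 1 - lam * v" unfolding \<rho>_def v_def m_A[OF A] using wp[of i] by (simp add: field_simps)
    have v0: "0 < v" "v < 1" using A xp[of i] wp[of i] unfolding v_def by (auto simp: field_simps)
    have \<rho>p: "\<rho> > 0" using fac_pos \<rho>_def by simp
    have pi': "p' i = p i * \<rho>" using p'_eq \<rho>_def by simp
    have "x i (p(i := p' i)) * (p' i) powr E \<le> x i (p(i := p i)) * (p i) powr E"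
      using own[OF p_pos p'p[of i] A_le[OF A]] .
    hence "x i (p(i := p' i)) * \<rho> powr E * (p i) powr E \<le> x i p * (p i) powr E"
      using pi' pp[of i] \<rho>p by (simp add: powr_mult mult.assoc mult.commute mult.left_commute)
    hence f1: "x i (p(i := p' i)) * \<rho> powr E \<le> x i p" using pp[of i] by simp
    have "1 - v \<le> \<rho> powr E" unfolding \<rho>v using num2[OF v0 _ lam_le lamE E_ge] lam_pos by simp
    hence "w i * (1 - v) \<le> w i * \<rho> powr E" using wp[of i] by simp
    moreover have "w i * (1 - v) = x i p" unfolding v_def using wp[of i] by (simp add: field_simps)
    ultimately have "x i (p(i := p' i)) * \<rho> powr E \<le> w i * \<rho> powr E" using f1 by simp
    hence f2: "x i (p(i := p' i)) \<le> w i" using \<rho>p by simp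
    have "x i r \<le> x i (p(i := p' i))"
      by (rule wgs_multi[OF WGS posr]) (use r_le_p A in \<open>auto simp: r_def\<close>)
    hence "x i r \<le> w i" using f2 by simp
    moreover have "r i = p' i" using A r_def by simp
    ultimately show ?thesis unfolding sr_def a_def using p'p[of i] by simp
  qed
  have F2: "sr i \<le> s' i" if A: "x i p < w i" for i
  proof -
    have "x i r \<le> x i p'" by (rule wgs_multi[OF WGS posr r_le_p']) (use A in \<open>simp add: r_def\<close>)
    moreover have "r i = p' i" using A r_def by simp
    ultimately show ?thesis unfolding sr_def s'_def using p'p[of i] by simp
  qed
  have F3: "a i - s' i \<le> s i - sr i \<and> sr i \<le> s i" if B: "\<not> x i p < w i" for i
  proof -
    define \<rho> where "\<rho> = 1 + lam * m i"
    define X where "X = x i p"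
    define y where "y = x i r"
    define x' where "x' = x i p'"
    have ri: "r i = p i" using B r_def by simp
    have \<rho>1: "\<rho> \<ge> 1" using m_B[OF B] lam_pos unfolding \<rho>_def by simp
    have pi': "p' i = p i * \<rho>" using p'_eq \<rho>_def by simp
    have "x i (r(i := p i)) * (p i) powr E \<le> x i (r(i := p' i)) * (p' i) powr E"
      using own[OF posr pp[of i] B_ge[OF B]] .
    moreover have "r(i := p i) = r" using ri by auto
    moreover have "x i (r(i := p' i)) \<le> x'"
    proof -
      have "pos_prices (r(i := p' i))" using rp p'p by (auto simp: pos_prices_def)
      thus ?thesis unfolding x'_def by (rule wgs_multi[OF WGS]) (use r_le_p' in auto)
    qed
    ultimately have "y * (p i) powr E \<le> x' * (p' i) powr E"
      unfolding y_def using p'p[of i]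
      by (smt (verit) mult_right_mono powr_ge_zero)
    hence "y * (p i) powr E \<le> x' * \<rho> powr E * (p i) powr E"
      using pi' pp[of i] \<rho>1 by (simp add: powr_mult mult.assoc mult.commute mult.left_commute)
    hence yx: "y \<le> x' * \<rho> powr E" using pp[of i] by simp
    have yX: "y \<le> X" unfolding y_def X_def by (rule wgs_multi[OF WGS posr r_le_p]) (use ri in simp)
    have "\<rho> powr E \<le> 1 + m i" unfolding \<rho>_def
      using num1[of "m i" lam E] m_B[OF B] m_le lam_pos lamE E_ge by simp
    moreover have "1 + m i \<le> X / w i"
    proof -
      have "m i \<le> (x i p - w i) / w i" unfolding m_def by simp
      thus ?thesis unfolding X_def using wp[of i] by (simp add: field_simps)
    qed
    ultimately have "\<rho> powr E \<le> X / w i" by simp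
    hence wX: "w i * \<rho> powr E \<le> X" using wp[of i] by (simp add: field_simps)
    have \<rho>P: "\<rho> \<le> \<rho> powr E" using powr_mono[OF E_ge \<rho>1] \<rho>1 by simp
    have Pp: "\<rho> powr E > 0" using \<rho>1 by simp
    have "\<rho> powr E * (\<rho> * (w i - x')) = \<rho> * (w i * \<rho> powr E - x' * \<rho> powr E)" by (simp add: algebra_simps)
    also have "\<dots> \<le> \<rho> * (X - y)" using wX yx \<rho>1 by (intro mult_left_mono) auto
    also have "\<dots> \<le> \<rho> powr E * (X - y)" using \<rho>P yX by (intro mult_right_mono) auto
    finally have "\<rho> * (w i - x') \<le> X - y" using Pp by simp
    hence "p i * (\<rho> * (w i - x')) \<le> p i * (X - y)" using pp[of i] by (intro mult_left_mono) auto
    hence "a i - s' i \<le> s i - sr i" unfolding a_def s'_def s_def sr_def pi' ri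
      by (simp add: X_def y_def x'_def algebra_simps)
    moreover have "sr i \<le> s i" unfolding sr_def s_def ri using yX pp[of i] X_def y_def by simp
    ultimately show ?thesis by simp
  qed
  define c where "c = (\<lambda>i. if x i p < w i then a i else s i)"
  define b where "b = (\<lambda>i. c i - sr i)"
  have key: "max 0 (a i - s' i) \<le> b i" for i
  proof (cases "x i p < w i")
    case True
    then show ?thesis using F1[OF True] F2[OF True] unfolding b_def c_def by simp
  next
    case False
    then show ?thesis using F3[OF False] unfolding b_def c_def by simp
  qed
  have a_s_B: "a i \<le> s i" if B: "\<not> x i p < w i" for i
  proof -
    have "m i \<le> (x i p - w i) / w i" unfolding m_def by simp
    hence "m i * w i \<le> x i p - w i" using wp[of i] by (simp add: field_simps)
    moreover have "lam * (m i * w i) \<le> 1 * (m i * w i)"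
      using lam_le m_B[OF B] wp[of i] by (intro mult_right_mono) auto
    ultimately have "w i * (1 + lam * m i) \<le> x i p" by (simp add: algebra_simps)
    hence "p i * (w i * (1 + lam * m i)) \<le> p i * x i p" using pp[of i] by simp
    thus ?thesis unfolding a_def s_def p'_eq by (simp add: algebra_simps)
  qed
  have a_s_A: "s i \<le> a i" if A: "x i p < w i" for i
  proof -
    have "sr i \<le> s' i" by (rule F2[OF A])
    have mw: "m i * w i = x i p - w i" using m_A[OF A] wp[of i] by simp
    have "w i * (1 + lam * m i) = w i + lam * (m i * w i)" by (simp add: algebra_simps)
    hence "w i * (1 + lam * m i) = w i + lam * (x i p - w i)" using mw by simp
    moreover have "lam * (x i p - w i) \<ge> 1 * (x i p - w i)"
      using lam_le A by (intro mult_right_mono_neg) auto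
    ultimately have "x i p \<le> w i * (1 + lam * m i)" by simp
    hence "p i * x i p \<le> p i * (w i * (1 + lam * m i))" using pp[of i] by simp
    thus ?thesis unfolding a_def s_def p'_eq by (simp add: algebra_simps)
  qed
  have cs: "c i - s i = max 0 (a i - s i)" for i
    using a_s_A a_s_B unfolding c_def by auto
  have sumM: "(\<Sum>i\<in>UNIV. s i) = M" "(\<Sum>i\<in>UNIV. s' i) = M" "(\<Sum>i\<in>UNIV. sr i) = M"
    using spending p_pos posp' posr unfolding s_def s'_def sr_def by auto
  have absid: "\<bar>t - a i\<bar> = (t - a i) + 2 * max 0 (a i - t)" for t i by (simp add: abs_if max_def)
  have D: "(\<Sum>i\<in>UNIV. max 0 (a i - s' i)) \<le> (\<Sum>i\<in>UNIV. max 0 (a i - s i))"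
  proof -
    have "(\<Sum>i\<in>UNIV. max 0 (a i - s' i)) \<le> (\<Sum>i\<in>UNIV. b i)" by (intro sum_mono key)
    also have "\<dots> = (\<Sum>i\<in>UNIV. c i) - M" unfolding b_def using sumM by (simp add: sum_subtractf)
    also have "\<dots> = (\<Sum>i\<in>UNIV. c i - s i)" using sumM by (simp add: sum_subtractf)
    also have "\<dots> = (\<Sum>i\<in>UNIV. max 0 (a i - s i))" using cs by simp
    finally show ?thesis .
  qed
  have main: "(\<Sum>i\<in>UNIV. \<bar>s' i - a i\<bar>) \<le> (\<Sum>i\<in>UNIV. \<bar>s i - a i\<bar>)"
  proof -
    have "(\<Sum>i\<in>UNIV. \<bar>s' i - a i\<bar>) = M - (\<Sum>i\<in>UNIV. a i) + 2 * (\<Sum>i\<in>UNIV. max 0 (a i - s' i))"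
      unfolding absid using sumM by (simp add: sum.distrib sum_subtractf sum_distrib_left)
    moreover have "(\<Sum>i\<in>UNIV. \<bar>s i - a i\<bar>) = M - (\<Sum>i\<in>UNIV. a i) + 2 * (\<Sum>i\<in>UNIV. max 0 (a i - s i))"
      unfolding absid using sumM by (simp add: sum.distrib sum_subtractf sum_distrib_left)
    ultimately show ?thesis using D by simp
  qed
  have phi'_eq: "phi x w p' = (\<Sum>i\<in>UNIV. \<bar>s' i - a i\<bar>)"
    unfolding phi_def s'_def a_def
  proof (rule sum.cong[OF refl])
    fix i
    have "p' i * \<bar>x i p' - w i\<bar> = \<bar>p' i * (x i p' - w i)\<bar>" using p'p[of i] by (simp add: abs_mult)
    thus "p' i * \<bar>x i p' - w i\<bar> = \<bar>p' i * x i p' - p' i * w i\<bar>" by (simp add: algebra_simps)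
  qed
  define R where "R = (\<lambda>i. lam * p i * \<bar>x i p - w i\<bar> * min 1 (w i / \<bar>x i p - w i\<bar>))"
  have termeq: "p i * \<bar>x i p - w i\<bar> - \<bar>s i - a i\<bar> = R i" for i
  proof -
    define z where "z = x i p - w i"
    have sa: "s i - a i = p i * (z - lam * m i * w i)" unfolding s_def a_def p'_eq z_def by (simp add: algebra_simps)
    have wi: "w i > 0" "p i > 0" using wp pp by auto
    consider "z \<ge> w i" | "0 < z" "z < w i" | "z = 0" | "z < 0" by linarith
    then show ?thesis
    proof cases
      case 1
      have "m i = 1" unfolding m_def using 1 wi by (simp add: z_def[symmetric] field_simps)
      moreover have "min 1 (w i / \<bar>z\<bar>) = w i / z" using 1 wi by (simp add: field_simps)
      moreover have "z - lam * w i \<ge> 0"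
      proof -
        have "lam * w i \<le> 1 * w i" using lam_le wi by (intro mult_right_mono) auto
        thus ?thesis using 1 by simp
      qed
      ultimately show ?thesis unfolding R_def z_def[symmetric] sa using 1 wi
        by (simp add: abs_mult field_simps)
    next
      case 2
      have "m i = z / w i" unfolding m_def using 2 wi by (simp add: z_def[symmetric] field_simps)
      hence lmz: "lam * m i * w i = lam * z" using wi by simp
      have sa2: "s i - a i = p i * (z - lam * z)" using sa lmz by simp
      moreover have "min 1 (w i / \<bar>z\<bar>) = 1" using 2 wi by (simp add: field_simps)
      moreover have "z - lam * z \<ge> 0"
      proof -
        have "lam * z \<le> 1 * z" using lam_le 2 by (intro mult_right_mono) auto
        thus ?thesis by simp
      qed
      ultimately have "\<bar>s i - a i\<bar> = p i * (z - lam * z)" using wi by (simp add: abs_mult)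
      moreover have "\<bar>z\<bar> = z" using 2 by simp
      ultimately show ?thesis unfolding R_def z_def[symmetric] using \<open>min 1 (w i / \<bar>z\<bar>) = 1\<close>
        by (simp add: algebra_simps)
    next
      case 3
      have "m i = 0" unfolding m_def using 3 wi by (simp add: z_def[symmetric])
      then show ?thesis unfolding R_def z_def[symmetric] sa using 3 by simp
    next
      case 4
      have "m i = z / w i" unfolding m_def using 4 wi by (simp add: z_def[symmetric] field_simps)
      hence lmz: "lam * m i * w i = lam * z" using wi by simp
      have sa2: "s i - a i = p i * (z - lam * z)" using sa lmz by simp
      moreover have "- z < w i" using xp[of i] unfolding z_def by simp
      hence "min 1 (w i / \<bar>z\<bar>) = 1" using 4 wi by (simp add: field_simps)
      moreover have "z - lam * z \<le> 0"
      proof -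
        have "1 * z \<le> lam * z" using lam_le 4 by (intro mult_right_mono_neg) auto
        thus ?thesis by simp
      qed
      ultimately have "\<bar>s i - a i\<bar> = p i * (lam * z - z)" using wi by (simp add: abs_mult)
      moreover have "\<bar>z\<bar> = - z" using 4 by simp
      ultimately show ?thesis unfolding R_def z_def[symmetric] using \<open>min 1 (w i / \<bar>z\<bar>) = 1\<close>
        by (simp add: algebra_simps)
    qed
  qed
  have part1: "phi x w p - phi x w p' \<ge> (\<Sum>i\<in>UNIV. R i)"
  proof -
    have "(\<Sum>i\<in>UNIV. R i) = phi x w p - (\<Sum>i\<in>UNIV. \<bar>s i - a i\<bar>)"
      unfolding phi_def using termeq by (simp add: sum_subtractf[symmetric])
    thus ?thesis using main phi'_eq by simp
  qed
  have part2: "phi x w p' \<le> (1 - lam / (d - 1)) * phi x w p" if d: "d \<ge> 2" "\<forall>i. x i p \<le> d * w i" for d :: real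
  proof -
    have Rge: "R i \<ge> lam / (d - 1) * (p i * \<bar>x i p - w i\<bar>)" for i
    proof (cases "x i p = w i")
      case True then show ?thesis unfolding R_def by simp
    next
      case False
      define z where "z = x i p - w i"
      have z0: "\<bar>z\<bar> > 0" using False z_def by simp
      have dw: "2 * w i \<le> d * w i" using d(1) wp[of i] by (intro mult_right_mono) auto
      have "\<bar>z\<bar> \<le> (d - 1) * w i"
      proof (cases "z \<ge> 0")
        case True
        thus ?thesis using d(2)[rule_format, of i] unfolding z_def by (simp add: algebra_simps)
      next
        case False
        hence "\<bar>z\<bar> < w i" using xp[of i] unfolding z_def by simp
        moreover have "w i \<le> (d - 1) * w i" using dw by (simp add: algebra_simps)
        ultimately show ?thesis by simp
      qed
      hence "1 / (d - 1) \<le> w i / \<bar>z\<bar>" using z0 d(1) by (simp add: field_simps)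
      moreover have "1 / (d - 1) \<le> 1" using d(1) by simp
      ultimately have mn: "1 / (d - 1) \<le> min 1 (w i / \<bar>z\<bar>)" by simp
      have "lam * p i * \<bar>z\<bar> * (1 / (d - 1)) \<le> lam * p i * \<bar>z\<bar> * min 1 (w i / \<bar>z\<bar>)"
        using mn lam_pos pp[of i] by (intro mult_left_mono) auto
      thus ?thesis unfolding R_def z_def[symmetric] by (simp add: field_simps)
    qed
    have "lam / (d - 1) * phi x w p \<le> (\<Sum>i\<in>UNIV. R i)"
      unfolding phi_def sum_distrib_left by (intro sum_mono Rge)
    thus ?thesis using part1 by (simp add: algebra_simps)
  qed
  show ?thesis using part1 part2 unfolding R_def p'_def by blast
qed
end
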